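(* Let $\sigma$ be a signature and $\mathcal F\in\mathbb F_\sigma$. (i) For any generalized causal team $T$ over $\sigma$: $T\models^g\Phi^{\mathcal F}$ iff $\mathcal G\sim\mathcal F$ for all $(s,\mathcal G)\in T$, iff $T^{\mathcal F}=T$. (ii) For any nonempty causal team $T=(T^-,\mathcal G)$ over $\sigma$: $T\models^c\Phi^{\mathcal F}$ iff $\mathcal G\sim\mathcal F$.
   Context: A signature $\sigma=(\mathrm{Dom},\mathrm{Ran})$: $\mathrm{Dom}$ nonempty finite set of variables, each with nonempty finite range $\mathrm{Ran}(X)$; $\mathbf X=\mathbf x$ abbreviates $X_1=x_1\wedge\dots\wedge X_n=x_n$ ($\mathbf x\in\mathrm{Ran}(\mathbf X)=\prod\mathrm{Ran}(X_i)$), inconsistent if it contains $X=x,X=x'$ with $x\neq x'$. $\mathcal{CO}[\sigma]$-formulas: $\alpha::=X=x\mid\neg\alpha\mid\alpha\wedge\alpha\mid\alpha\vee\alpha\mid\mathbf X=\mathbf x\;\Box\!\!\rightarrow\alpha$; $\alpha\supset\beta$ abbreviates $\neg\alpha\vee\beta$. Assignments $s$ on $\mathrm{Dom}$ with $s(X)\in\mathrm{Ran}(X)$. A system of functions $\mathcal F$: for each $V\in\mathrm{En}(\mathcal F)\subseteq\mathrm{Dom}$ a set $PA^{\mathcal F}_V\subseteq\mathrm{Dom}\setminus\{V\}$ and $\mathcal F_V:\mathrm{Ran}(PA^{\mathcal F}_V)\to\mathrm{Ran}(V)$; $\mathrm{Ex}(\mathcal F)=\mathrm{Dom}\setminus\mathrm{En}(\mathcal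 F)$; only recursive systems (acyclic parent graph), forming $\mathbb F_\sigma$. $s$ is compatible with $\mathcal F$ if $s(V)=\mathcal F_V(s(PA^{\mathcal F}_V))$ for $V\in\mathrm{En}(\mathcal F)$; $\mathbb S_\sigma$ = set of compatible pairs $(s,\mathcal F)$. For consistent $\mathbf X=\mathbf x$, $\mathcal F_{\mathbf X=\mathbf x}$ is the restriction to $\mathrm{En}(\mathcal F)\setminus\mathbf X$; $s^{\mathcal F}_{\mathbf X=\mathbf x}$: $X_i\mapsto x_i$, $V\mapsto s(V)$ for $V\in\mathrm{Ex}(\mathcal F)\setminus\mathbf X$, $V\mapsto\mathcal F_V(s^{\mathcal F}_{\mathbf X=\mathbf x}(PA^{\mathcal F}_V))$ for $V\in\mathrm{En}(\mathcal F)\setminus\mathbf X$. Causal team $T=(T^-,\mathcal F)$: $T^-$ a set of assignments compatible with $\mathcal F$; causal subteams $(S^-,\mathcal F)$, $S^-\subseteq T^-$; $T_{\mathbf X=\mathbf x}=(\{s^{\mathcal F}_{\mathbf X=\mathbf x}:s\in T^-\},\mathcal F_{\mathbf X=\mathbf x})$; $\models^c$: $T\models X=x$ iff $s(X)=x$ for all $s\in T^-$; $T\models\neg\alpha$ iff $(\{s\},\mathcal F)\not\models\alpha$ for all $s\in T^-$; $\wedge$ classical; $T\models\alpha\vee\beta$ iff there are causal subteams $T_1,T_2$ with $T_1^-\cup T_2^-=T^-$, $T_1\models\alpha$, $T_2\models\beta$; $T\models\mathbf X=\mathbf x\;\Box\!\!\rightarrow\alpha$ iff $\mathbf X=\mathbf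 x$ inconsistent or $T_{\mathbf X=\mathbf x}\models\alpha$. Generalized causal team: a set $T\subseteq\mathbb S_\sigma$, $T^-=\{s:(s,\mathcal F)\in T\}$, $T_{\mathbf X=\mathbf x}=\{(s^{\mathcal F}_{\mathbf X=\mathbf x},\mathcal F_{\mathbf X=\mathbf x}):(s,\mathcal F)\in T\}$; $\models^g$: same clauses except $T\models\neg\alpha$ iff $\{(s,\mathcal F)\}\not\models\alpha$ for all $(s,\mathcal F)\in T$, and $T\models\alpha\vee\beta$ iff $T=T_1\cup T_2$ with $T_1\models\alpha$, $T_2\models\beta$. $\mathrm{Cn}(\mathcal F)$ = set of $V\in\mathrm{En}(\mathcal F)$ with $\mathcal F_V$ constant. $\mathcal F_V\sim\mathcal G_V$ iff $\mathcal F_V(\mathbf x\mathbf y)=\mathcal G_V(\mathbf x\mathbf z)$ for all $\mathbf x\in\mathrm{Ran}(PA^{\mathcal F}_V\cap PA^{\mathcal G}_V)$, $\mathbf y\in\mathrm{Ran}(PA^{\mathcal F}_V\setminus PA^{\mathcal G}_V)$, $\mathbf z\in\mathrm{Ran}(PA^{\mathcal G}_V\setminus PA^{\mathcal F}_V)$. $\mathcal F\sim\mathcal G$ iff $\mathrm{En}(\mathcal F)\setminus\mathrm{Cn}(\mathcal F)=\mathrm{En}(\mathcal G)\setminus\mathrm{Cn}(\mathcal G)$ and $\mathcal F_V\sim\mathcal G_V$ for each $V$ in this set. $T^{\mathcal F}=\{(s,\mathcal G)\in T:\mathcal G\sim\mathcal F\}$. For $V\in\mathrm{Dom}$ let $\mathbf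 W_V$ list $\mathrm{Dom}\setminus\{V\}$. $\Phi^{\mathcal F}:=\bigwedge_{V\in\mathrm{En}(\mathcal F)\setminus\mathrm{Cn}(\mathcal F)}\eta(V)\wedge\bigwedge_{V\in\mathrm{Dom}\setminus(\mathrm{En}(\mathcal F)\setminus\mathrm{Cn}(\mathcal F))}\xi(V)$, where $\eta(V)$ is the conjunction of all formulas $(\mathbf W=\mathbf w\wedge PA^{\mathcal F}_V=\mathbf p)\;\Box\!\!\rightarrow V=\mathcal F_V(\mathbf p)$ with $\mathbf W$ listing $\mathrm{Dom}\setminus(PA^{\mathcal F}_V\cup\{V\})$, $\mathbf w\in\mathrm{Ran}(\mathbf W)$, $\mathbf p\in\mathrm{Ran}(PA^{\mathcal F}_V)$, and $\xi(V)$ is the conjunction of all formulas $V=v\supset(\mathbf W_V=\mathbf w\;\Box\!\!\rightarrow V=v)$ with $v\in\mathrm{Ran}(V)$, $\mathbf w\in\mathrm{Ran}(\mathbf W_V)$. *)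

theory Defs
  imports Main "HOL-Library.FuncSet"
begin

text \<open>A signature is given by a set Dom of variables (type 'v) and ranges Ran :: 'v => 'a set.
  Assignments are extensional functions in PiE Dom Ran (value undefined outside Dom).\<close>

definition is_sig :: "'v set \<Rightarrow> ('v \<Rightarrow> 'a set) \<Rightarrow> bool" where
  "is_sig Dom Ran \<longleftrightarrow> finite Dom \<and> Dom \<noteq> {} \<and> (\<forall>X\<in>Dom. finite (Ran X) \<and> Ran X \<noteq> {})"

text \<open>A system of functions: endogenous variables, parent sets, and for each endogenous V a function
  on assignments of its parents (extensional functions in PiE (PA V) Ran).\<close>
record ('v, 'a) sys =
  En :: "'v set"
  PA :: "'v \<Rightarrow> 'v set"
  Fn :: "'v \<Rightarrow> ('v \<Rightarrow> 'a) \<Rightarrow> 'a"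

text \<open>The recursive systems of functions over the signature (canonically represented:
  junk values outside the intended domains are fixed to undefined).\<close>
definition FF :: "'v set \<Rightarrow> ('v \<Rightarrow> 'a set) \<Rightarrow> ('v, 'a) sys set" where
  "FF Dom Ran = {F. En F \<subseteq> Dom
     \<and> (\<forall>V\<in>En F. PA F V \<subseteq> Dom - {V})
     \<and> (\<forall>V\<in>En F. \<forall>p\<in>PiE (PA F V) Ran. Fn F V p \<in> Ran V)
     \<and> (\<forall>V\<in>En F. \<forall>p. p \<notin> PiE (PA F V) Ran \<longrightarrow> Fn F V p = undefined)
     \<and> (\<forall>V. V \<notin> En F \<longrightarrow> PA F V = {} \<and> Fn F V = (\<lambda>_. undefined))
     \<and> acyclic {(P, V). V \<in> En F \<and> P \<in> PA F V}}"

definition compat :: "('v, 'a) sys \<Rightarrow> ('v \<Rightarrow> 'a) \<Rightarrow> bool" where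
  "compat F s \<longleftrightarrow> (\<forall>V\<in>En F. s V = Fn F V (restrict s (PA F V)))"

definition SS :: "'v set \<Rightarrow> ('v \<Rightarrow> 'a set) \<Rightarrow> (('v \<Rightarrow> 'a) \<times> ('v, 'a) sys) set" where
  "SS Dom Ran = {(s, F). s \<in> PiE Dom Ran \<and> F \<in> FF Dom Ran \<and> compat F s}"

definition causal_team :: "'v set \<Rightarrow> ('v \<Rightarrow> 'a set) \<Rightarrow> ('v \<Rightarrow> 'a) set \<Rightarrow> ('v, 'a) sys \<Rightarrow> bool" where
  "causal_team Dom Ran S G \<longleftrightarrow> G \<in> FF Dom Ran \<and> (\<forall>s\<in>S. s \<in> PiE Dom Ran \<and> compat G s)"

text \<open>An intervention X = x is a list of variable/value pairs.\<close>
definition consistent :: "('v \<times> 'a) list \<Rightarrow> bool" where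
  "consistent xs \<longleftrightarrow> (\<forall>(X, x)\<in>set xs. \<forall>(Y, y)\<in>set xs. X = Y \<longrightarrow> x = y)"

definition sys_do :: "('v, 'a) sys \<Rightarrow> ('v \<times> 'a) list \<Rightarrow> ('v, 'a) sys" where
  "sys_do F xs = \<lparr>En = En F - fst ` set xs,
     PA = (\<lambda>V. if V \<in> En F - fst ` set xs then PA F V else {}),
     Fn = (\<lambda>V. if V \<in> En F - fst ` set xs then Fn F V else (\<lambda>_. undefined))\<rparr>"

definition asg_do :: "('v, 'a) sys \<Rightarrow> ('v \<times> 'a) list \<Rightarrow> ('v \<Rightarrow> 'a) \<Rightarrow> ('v \<Rightarrow> 'a)" where
  "asg_do F xs s = (THE t. (\<forall>(X, x)\<in>set xs. t X = x)
      \<and> (\<forall>V. V \<notin> En F \<and> V \<notin> fst ` set xs \<longrightarrow> t V = s V)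
      \<and> (\<forall>V\<in>En F - fst ` set xs. t V = Fn F V (restrict t (PA F V))))"

datatype ('v, 'a) fml =
    FAtom 'v 'a
  | FNeg "('v, 'a) fml"
  | FAnd "('v, 'a) fml" "('v, 'a) fml"
  | FOr "('v, 'a) fml" "('v, 'a) fml"
  | FCf "('v \<times> 'a) list" "('v, 'a) fml"

definition FImp :: "('v, 'a) fml \<Rightarrow> ('v, 'a) fml \<Rightarrow> ('v, 'a) fml" where
  "FImp \<alpha> \<beta> = FOr (FNeg \<alpha>) \<beta>"

fun sat_g :: "(('v \<Rightarrow> 'a) \<times> ('v, 'a) sys) set \<Rightarrow> ('v, 'a) fml \<Rightarrow> bool" where
  "sat_g T (FAtom X x) = (\<forall>(s, F)\<in>T. s X = x)"
| "sat_g T (FNeg \<alpha>) = (\<forall>(s, F)\<in>T. \<not> sat_g {(s, F)} \<alpha>)"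
| "sat_g T (FAnd \<alpha> \<beta>) = (sat_g T \<alpha> \<and> sat_g T \<beta>)"
| "sat_g T (FOr \<alpha> \<beta>) = (\<exists>T1 T2. T = T1 \<union> T2 \<and> sat_g T1 \<alpha> \<and> sat_g T2 \<beta>)"
| "sat_g T (FCf xs \<alpha>) = (\<not> consistent xs \<or>
     sat_g ((\<lambda>(s, F). (asg_do F xs s, sys_do F xs)) ` T) \<alpha>)"

fun sat_c :: "('v \<Rightarrow> 'a) set \<Rightarrow> ('v, 'a) sys \<Rightarrow> ('v, 'a) fml \<Rightarrow> bool" where
  "sat_c S G (FAtom X x) = (\<forall>s\<in>S. s X = x)"
| "sat_c S G (FNeg \<alpha>) = (\<forall>s\<in>S. \<not> sat_c {s} G \<alpha>)"
| "sat_c S G (FAnd \<alpha> \<beta>) = (sat_c S G \<alpha> \<and> sat_c S G \<beta>)"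
| "sat_c S G (FOr \<alpha> \<beta>) = (\<exists>S1 S2. S1 \<union> S2 = S \<and> sat_c S1 G \<alpha> \<and> sat_c S2 G \<beta>)"
| "sat_c S G (FCf xs \<alpha>) = (\<not> consistent xs \<or>
     sat_c (asg_do G xs ` S) (sys_do G xs) \<alpha>)"

definition Cn :: "('v \<Rightarrow> 'a set) \<Rightarrow> ('v, 'a) sys \<Rightarrow> 'v set" where
  "Cn Ran F = {V\<in>En F. \<exists>c. \<forall>p\<in>PiE (PA F V) Ran. Fn F V p = c}"

definition fn_equiv :: "('v \<Rightarrow> 'a set) \<Rightarrow> ('v, 'a) sys \<Rightarrow> ('v, 'a) sys \<Rightarrow> 'v \<Rightarrow> bool" where
  "fn_equiv Ran F G V \<longleftrightarrow>
     (\<forall>x\<in>PiE (PA F V \<inter> PA G V) Ran. \<forall>y\<in>PiE (PA F V - PA G V) Ran. \<forall>z\<in>PiE (PA G V - PA F V) Ran.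
        Fn F V (\<lambda>v. if v \<in> PA F V \<inter> PA G V then x v else y v)
      = Fn G V (\<lambda>v. if v \<in> PA F V \<inter> PA G V then x v else z v))"

definition sys_equiv :: "('v \<Rightarrow> 'a set) \<Rightarrow> ('v, 'a) sys \<Rightarrow> ('v, 'a) sys \<Rightarrow> bool" where
  "sys_equiv Ran F G \<longleftrightarrow> En F - Cn Ran F = En G - Cn Ran G
     \<and> (\<forall>V\<in>En F - Cn Ran F. fn_equiv Ran F G V)"

definition team_restr :: "('v \<Rightarrow> 'a set) \<Rightarrow> (('v \<Rightarrow> 'a) \<times> ('v, 'a) sys) set \<Rightarrow> ('v, 'a) sys
    \<Rightarrow> (('v \<Rightarrow> 'a) \<times> ('v, 'a) sys) set" where
  "team_restr Ran T F = {(s, G)\<in>T. sys_equiv Ran G F}"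

text \<open>A fixed enumeration of a finite set of variables (order is irrelevant).\<close>
definition var_list :: "'v set \<Rightarrow> 'v list" where
  "var_list A = (SOME xs. set xs = A \<and> distinct xs)"

definition ivn :: "'v set \<Rightarrow> ('v \<Rightarrow> 'a) \<Rightarrow> ('v \<times> 'a) list" where
  "ivn A w = map (\<lambda>X. (X, w X)) (var_list A)"

fun conj_list :: "('v, 'a) fml list \<Rightarrow> ('v, 'a) fml" where
  "conj_list [] = undefined"
| "conj_list [\<phi>] = \<phi>"
| "conj_list (\<phi> # \<psi>s) = FAnd \<phi> (conj_list \<psi>s)"

definition eta :: "'v set \<Rightarrow> ('v \<Rightarrow> 'a set) \<Rightarrow> ('v, 'a) sys \<Rightarrow> 'v \<Rightarrow> ('v, 'a) fml set" where
  "eta Dom Ran F V = {FCf (ivn (Dom - (PA F V \<union> {V})) w @ ivn (PA F V) p) (FAtom V (Fn F V p)) | w p.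
      w \<in> PiE (Dom - (PA F V \<union> {V})) Ran \<and> p \<in> PiE (PA F V) Ran}"

definition xi :: "'v set \<Rightarrow> ('v \<Rightarrow> 'a set) \<Rightarrow> 'v \<Rightarrow> ('v, 'a) fml set" where
  "xi Dom Ran V = {FImp (FAtom V v) (FCf (ivn (Dom - {V}) w) (FAtom V v)) | v w.
      v \<in> Ran V \<and> w \<in> PiE (Dom - {V}) Ran}"

definition PhiSet :: "'v set \<Rightarrow> ('v \<Rightarrow> 'a set) \<Rightarrow> ('v, 'a) sys \<Rightarrow> ('v, 'a) fml set" where
  "PhiSet Dom Ran F = (\<Union>V\<in>En F - Cn Ran F. eta Dom Ran F V) \<union> (\<Union>V\<in>Dom - (En F - Cn Ran F). xi Dom Ran V)"

definition Phi :: "'v set \<Rightarrow> ('v \<Rightarrow> 'a set) \<Rightarrow> ('v, 'a) sys \<Rightarrow> ('v, 'a) fml" where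
  "Phi Dom Ran F = conj_list (SOME xs. set xs = PhiSet Dom Ran F \<and> distinct xs)"

end

theory Submission
  imports Defs "HOL-Library.FuncSet"
begin

lemma var_list: "finite A \<Longrightarrow> set (var_list A) = A \<and> distinct (var_list A)"
  unfolding var_list_def by (rule someI_ex) (rule finite_distinct_list)

lemma set_ivn: "finite A \<Longrightarrow> set (ivn A w) = (\<lambda>X. (X, w X)) ` A"
  by (simp add: ivn_def var_list)

lemma sat_g_conj: "xs \<noteq> [] \<Longrightarrow> sat_g T (conj_list xs) \<longleftrightarrow> (\<forall>\<phi>\<in>set xs. sat_g T \<phi>)"
  by (induction xs rule: conj_list.induct) auto

lemma consistent_u: "\<forall>(X,x)\<in>set xs. x = u X \<Longrightarrow> consistent xs"
  unfolding consistent_def by (auto simp: case_prod_beta)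

lemma asg_V:
  assumes xs: "\<forall>(X,x)\<in>set xs. x = u X" and fx: "fst ` set xs = Dom - {V}" and En: "En G \<subseteq> Dom"
    and PA: "V \<in> En G \<Longrightarrow> PA G V \<subseteq> Dom - {V}"
  shows "asg_do G xs s V = (if V \<in> En G then Fn G V (restrict u (PA G V)) else s V)"
proof -
  define t0 where "t0 = (\<lambda>X. if X \<in> Dom - {V} then u X else if X = V \<and> V \<in> En G then Fn G V (restrict u (PA G V)) else s X)"
  let ?P = "\<lambda>t. (\<forall>(X, x)\<in>set xs. t X = x) \<and> (\<forall>W. W \<notin> En G \<and> W \<notin> fst ` set xs \<longrightarrow> t W = s W) \<and> (\<forall>W\<in>En G - fst ` set xs. t W = Fn G W (restrict t (PA G W)))"
  have r: "restrict t (PA G V) = restrict u (PA G V)" if "V \<in> En G" "\<forall>X\<in>Dom-{V}. t X = u X" for t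
    using PA[OF that(1)] that(2) by (auto simp: restrict_def fun_eq_iff)
  have "?P t0"
  proof (intro conjI)
    show "\<forall>(X, x)\<in>set xs. t0 X = x" using xs fx by (force simp: t0_def)
    show "\<forall>W. W \<notin> En G \<and> W \<notin> fst ` set xs \<longrightarrow> t0 W = s W" using fx by (auto simp: t0_def)
    show "\<forall>W\<in>En G - fst ` set xs. t0 W = Fn G W (restrict t0 (PA G W))"
    proof
      fix W assume W: "W \<in> En G - fst ` set xs"
      then have "W = V" "V \<in> En G" using fx En by auto
      moreover have "restrict t0 (PA G V) = restrict u (PA G V)"
        by (rule r) (auto simp: t0_def \<open>V \<in> En G\<close>)
      ultimately show "t0 W = Fn G W (restrict t0 (PA G W))" by (simp add: t0_def)
    qed
  qed
  moreover have "t = t0" if P: "?P t" for t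
  proof
    fix W
    have tu: "\<forall>X\<in>Dom-{V}. t X = u X"
    proof
      fix X assume "X \<in> Dom - {V}"
      then have "X \<in> fst ` set xs" using fx by simp
      then obtain x where "(X, x) \<in> set xs" by force
      then show "t X = u X" using P xs by auto
    qed
    show "t W = t0 W"
    proof (cases "W \<in> Dom - {V}")
      case True then show ?thesis using tu by (simp add: t0_def)
    next
      case False
      show ?thesis
      proof (cases "W = V \<and> V \<in> En G")
        case True
        then have "t W = Fn G V (restrict t (PA G V))" using P fx by auto
        also have "\<dots> = Fn G V (restrict u (PA G V))" using r[OF _ tu] True by simp
        finally show ?thesis using True by (simp add: t0_def)
      next
        case F2: False
        then have "W \<notin> En G" using False En by auto
        then show ?thesis using P fx False F2 by (auto simp: t0_def)
      qed
    qed
  qed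
  ultimately have "asg_do G xs s = t0" unfolding asg_do_def by (rule the_equality)
  then show ?thesis by (simp add: t0_def)
qed

lemma ext_PiE:
  assumes "A \<subseteq> B" "q \<in> PiE A Ran" "\<forall>i\<in>B. Ran i \<noteq> {}"
  shows "\<exists>u\<in>PiE B Ran. restrict u A = q"
proof
  let ?u = "\<lambda>X. if X \<in> A then q X else if X \<in> B then (SOME r. r \<in> Ran X) else undefined"
  show "?u \<in> PiE B Ran" using assms by (auto simp: PiE_iff extensional_def some_in_eq)
  show "restrict ?u A = q" using assms(2) by (auto simp: restrict_def PiE_iff extensional_def)
qed

lemma restrict_PiE_sub: "f \<in> PiE B R \<Longrightarrow> A \<subseteq> B \<Longrightarrow> restrict f A \<in> PiE A R"
  by (auto simp: PiE_iff)

lemma fn_equiv_iff: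
  assumes "PA F V \<subseteq> D" "PA G V \<subseteq> D" "\<forall>i\<in>D. Ran i \<noteq> {}"
  shows "fn_equiv Ran G F V \<longleftrightarrow> (\<forall>u\<in>PiE D Ran. Fn G V (restrict u (PA G V)) = Fn F V (restrict u (PA F V)))"
proof
  assume H: "fn_equiv Ran G F V"
  show "\<forall>u\<in>PiE D Ran. Fn G V (restrict u (PA G V)) = Fn F V (restrict u (PA F V))"
  proof
    fix u assume u: "u \<in> PiE D Ran"
    have x: "restrict u (PA G V \<inter> PA F V) \<in> PiE (PA G V \<inter> PA F V) Ran"
      using u assms by (auto simp: PiE_iff)
    have y: "restrict u (PA G V - PA F V) \<in> PiE (PA G V - PA F V) Ran"
      using u assms by (auto simp: PiE_iff)
    have z: "restrict u (PA F V - PA G V) \<in> PiE (PA F V - PA G V) Ran"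
      using u assms by (auto simp: PiE_iff)
    have e1: "(\<lambda>v. if v \<in> PA G V \<inter> PA F V then restrict u (PA G V \<inter> PA F V) v else restrict u (PA G V - PA F V) v) = restrict u (PA G V)"
      by (auto simp: restrict_def)
    have e2: "(\<lambda>v. if v \<in> PA G V \<inter> PA F V then restrict u (PA G V \<inter> PA F V) v else restrict u (PA F V - PA G V) v) = restrict u (PA F V)"
      by (auto simp: restrict_def)
    show "Fn G V (restrict u (PA G V)) = Fn F V (restrict u (PA F V))"
      using H x y z unfolding fn_equiv_def e1[symmetric] e2[symmetric] by blast
  qed
next
  assume H: "\<forall>u\<in>PiE D Ran. Fn G V (restrict u (PA G V)) = Fn F V (restrict u (PA F V))"
  show "fn_equiv Ran G F V" unfolding fn_equiv_def
  proof (intro ballI)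
    fix x y z assume x: "x \<in> PiE (PA G V \<inter> PA F V) Ran" and y: "y \<in> PiE (PA G V - PA F V) Ran"
      and z: "z \<in> PiE (PA F V - PA G V) Ran"
    define u where "u = (\<lambda>v. if v \<in> PA G V \<inter> PA F V then x v else if v \<in> PA G V - PA F V then y v
       else if v \<in> PA F V - PA G V then z v else if v \<in> D then (SOME r. r \<in> Ran v) else undefined)"
    have u: "u \<in> PiE D Ran" using x y z assms
      by (auto simp: u_def PiE_iff extensional_def some_in_eq)
    have e1: "(\<lambda>v. if v \<in> PA G V \<inter> PA F V then x v else y v) = restrict u (PA G V)"
      using y by (auto simp: restrict_def u_def PiE_iff extensional_def)
    have e2: "(\<lambda>v. if v \<in> PA G V \<inter> PA F V then x v else z v) = restrict u (PA F V)"
      using z by (auto simp: restrict_def u_def PiE_iff extensional_def)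
    show "Fn G V (\<lambda>v. if v \<in> PA G V \<inter> PA F V then x v else y v) = Fn F V (\<lambda>v. if v \<in> PA G V \<inter> PA F V then x v else z v)"
      unfolding e1 e2 using H u by blast
  qed
qed


lemma FF_PA: "F \<in> FF Dom Ran \<Longrightarrow> V \<in> En F \<Longrightarrow> PA F V \<subseteq> Dom - {V}"
  by (auto simp: FF_def)
lemma FF_En: "F \<in> FF Dom Ran \<Longrightarrow> En F \<subseteq> Dom"
  by (auto simp: FF_def)

lemma A_iff:
  assumes sig: "is_sig Dom Ran" and F: "F \<in> FF Dom Ran" and G: "G \<in> FF Dom Ran"
    and V: "V \<in> En F - Cn Ran F"
  shows "(\<forall>w\<in>PiE (Dom - (PA F V \<union> {V})) Ran. \<forall>p\<in>PiE (PA F V) Ran.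
            asg_do G (ivn (Dom - (PA F V \<union> {V})) w @ ivn (PA F V) p) s V = Fn F V p)
     \<longleftrightarrow> (V \<in> En G \<and> (\<forall>u\<in>PiE (Dom - {V}) Ran. Fn G V (restrict u (PA G V)) = Fn F V (restrict u (PA F V))))"
proof -
  have fin: "finite Dom" and ne: "\<forall>i\<in>Dom. Ran i \<noteq> {}" using sig by (auto simp: is_sig_def)
  have PAF: "PA F V \<subseteq> Dom - {V}" using F V by (auto simp: FF_def)
  have asg: "asg_do G (ivn (Dom - (PA F V \<union> {V})) w @ ivn (PA F V) p) s V
     = (if V \<in> En G then Fn G V (restrict (\<lambda>X. if X \<in> PA F V then p X else w X) (PA G V)) else s V)" for w p
  proof (rule asg_V[where Dom=Dom])
    have f1: "finite (Dom - (PA F V \<union> {V}))" "finite (PA F V)" using fin PAF by (auto intro: finite_subset)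
    show "\<forall>(X, x)\<in>set (ivn (Dom - (PA F V \<union> {V})) w @ ivn (PA F V) p). x = (if X \<in> PA F V then p X else w X)"
      using f1 by (auto simp: set_ivn)
    show "fst ` set (ivn (Dom - (PA F V \<union> {V})) w @ ivn (PA F V) p) = Dom - {V}"
      using f1 PAF by (auto simp: set_ivn image_Un image_image)
    show "En G \<subseteq> Dom" using G by (rule FF_En)
    show "V \<in> En G \<Longrightarrow> PA G V \<subseteq> Dom - {V}" using G by (rule FF_PA)
  qed
  show ?thesis
  proof
    assume H: "\<forall>w\<in>PiE (Dom - (PA F V \<union> {V})) Ran. \<forall>p\<in>PiE (PA F V) Ran.
            asg_do G (ivn (Dom - (PA F V \<union> {V})) w @ ivn (PA F V) p) s V = Fn F V p"
    have VG: "V \<in> En G"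
    proof (rule ccontr)
      assume nV: "V \<notin> En G"
      obtain w where w: "w \<in> PiE (Dom - (PA F V \<union> {V})) Ran" using ne
        by (metis (no_types, lifting) DiffD1 PiE_eq_empty_iff ex_in_conv)
      have "\<forall>p\<in>PiE (PA F V) Ran. Fn F V p = s V" using H w asg nV by auto
      then have "V \<in> Cn Ran F" using V by (auto simp: Cn_def)
      then show False using V by simp
    qed
    show "V \<in> En G \<and> (\<forall>u\<in>PiE (Dom - {V}) Ran. Fn G V (restrict u (PA G V)) = Fn F V (restrict u (PA F V)))"
    proof (intro conjI VG ballI)
      fix u assume u: "u \<in> PiE (Dom - {V}) Ran"
      define w where "w = restrict u (Dom - (PA F V \<union> {V}))"
      define p where "p = restrict u (PA F V)"
      have w: "w \<in> PiE (Dom - (PA F V \<union> {V})) Ran" unfolding w_def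
        by (rule restrict_PiE_sub[OF u]) auto
      have p: "p \<in> PiE (PA F V) Ran" unfolding p_def
        by (rule restrict_PiE_sub[OF u]) (use PAF in auto)
      have e: "restrict (\<lambda>X. if X \<in> PA F V then p X else w X) (PA G V) = restrict u (PA G V)"
        using FF_PA[OF G VG] by (auto simp: w_def p_def restrict_def fun_eq_iff)
      show "Fn G V (restrict u (PA G V)) = Fn F V (restrict u (PA F V))"
        using H w p asg[of w p] VG e by (simp add: p_def)
    qed
  next
    assume H: "V \<in> En G \<and> (\<forall>u\<in>PiE (Dom - {V}) Ran. Fn G V (restrict u (PA G V)) = Fn F V (restrict u (PA F V)))"
    show "\<forall>w\<in>PiE (Dom - (PA F V \<union> {V})) Ran. \<forall>p\<in>PiE (PA F V) Ran.
            asg_do G (ivn (Dom - (PA F V \<union> {V})) w @ ivn (PA F V) p) s V = Fn F V p"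
    proof (intro ballI)
      fix w p assume w: "w \<in> PiE (Dom - (PA F V \<union> {V})) Ran" and p: "p \<in> PiE (PA F V) Ran"
      define u where "u = (\<lambda>X. if X \<in> PA F V then p X else w X)"
      have u: "u \<in> PiE (Dom - {V}) Ran" using w p PAF
        by (auto simp: u_def PiE_iff extensional_def)
      have "restrict u (PA F V) = p" using p by (auto simp: u_def restrict_def fun_eq_iff PiE_iff extensional_def)
      then show "asg_do G (ivn (Dom - (PA F V \<union> {V})) w @ ivn (PA F V) p) s V = Fn F V p"
        using asg[of w p] H u by (simp add: u_def)
    qed
  qed
qed

lemma B_iff:
  assumes sig: "is_sig Dom Ran" and G: "G \<in> FF Dom Ran" and s: "s \<in> PiE Dom Ran" and c: "compat G s"
    and V: "V \<in> Dom"
  shows "(\<forall>v\<in>Ran V. \<forall>w\<in>PiE (Dom - {V}) Ran. s V = v \<longrightarrow> asg_do G (ivn (Dom - {V}) w) s V = v)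
     \<longleftrightarrow> V \<notin> En G - Cn Ran G"
proof -
  have fin: "finite Dom" and ne: "\<forall>i\<in>Dom. Ran i \<noteq> {}" using sig by (auto simp: is_sig_def)
  have asg: "asg_do G (ivn (Dom - {V}) w) s V
     = (if V \<in> En G then Fn G V (restrict w (PA G V)) else s V)" for w
  proof (rule asg_V[where Dom=Dom])
    show "\<forall>(X, x)\<in>set (ivn (Dom - {V}) w). x = w X"
      using fin by (auto simp: set_ivn)
    show "fst ` set (ivn (Dom - {V}) w) = Dom - {V}"
      using fin by (auto simp: set_ivn image_image)
    show "En G \<subseteq> Dom" using G by (rule FF_En)
    show "V \<in> En G \<Longrightarrow> PA G V \<subseteq> Dom - {V}" using G by (rule FF_PA)
  qed
  have sV: "s V \<in> Ran V" using s V by auto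
  have L: "(\<forall>v\<in>Ran V. \<forall>w\<in>PiE (Dom - {V}) Ran. s V = v \<longrightarrow> asg_do G (ivn (Dom - {V}) w) s V = v)
     \<longleftrightarrow> (\<forall>w\<in>PiE (Dom - {V}) Ran. asg_do G (ivn (Dom - {V}) w) s V = s V)"
    using sV by auto
  have L2: "(\<forall>w\<in>PiE (Dom - {V}) Ran. asg_do G (ivn (Dom - {V}) w) s V = s V) \<longleftrightarrow>
     (\<forall>w\<in>PiE (Dom - {V}) Ran. (if V \<in> En G then Fn G V (restrict w (PA G V)) else s V) = s V)"
    using asg by simp
  show ?thesis unfolding L L2
  proof (rule iffI)
    assume H: "\<forall>w\<in>PiE (Dom - {V}) Ran. (if V \<in> En G then Fn G V (restrict w (PA G V)) else s V) = s V"
    show "V \<notin> En G - Cn Ran G"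
    proof (rule notI)
      assume VG: "V \<in> En G - Cn Ran G"
      have "\<forall>q\<in>PiE (PA G V) Ran. Fn G V q = s V"
      proof
        fix q assume q: "q \<in> PiE (PA G V) Ran"
        obtain w where w: "w \<in> PiE (Dom - {V}) Ran" "restrict w (PA G V) = q"
          using ext_PiE[OF FF_PA[OF G] q] VG ne by auto
        show "Fn G V q = s V" using H w VG by force
      qed
      then have "V \<in> Cn Ran G" using VG by (auto simp: Cn_def)
      then show False using VG by simp
    qed
  next
    assume H: "V \<notin> En G - Cn Ran G"
    show "\<forall>w\<in>PiE (Dom - {V}) Ran. (if V \<in> En G then Fn G V (restrict w (PA G V)) else s V) = s V"
    proof
      fix w assume w: "w \<in> PiE (Dom - {V}) Ran"
      show "(if V \<in> En G then Fn G V (restrict w (PA G V)) else s V) = s V"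
      proof (cases "V \<in> En G")
        case True
        then have "V \<in> Cn Ran G" using H by simp
        then obtain cc where cc: "\<forall>p\<in>PiE (PA G V) Ran. Fn G V p = cc" by (auto simp: Cn_def)
        have PAG: "PA G V \<subseteq> Dom - {V}" using FF_PA[OF G True] .
        have "restrict w (PA G V) \<in> PiE (PA G V) Ran" using restrict_PiE_sub[OF w PAG] .
        moreover have "restrict s (PA G V) \<in> PiE (PA G V) Ran" using restrict_PiE_sub[OF s] PAG by auto
        moreover have "s V = Fn G V (restrict s (PA G V))" using c True by (auto simp: compat_def)
        ultimately show ?thesis using cc True by simp
      qed simp
    qed
  qed
qed


lemma sat_cf: "sat_g T (FCf xs (FAtom V c)) \<longleftrightarrow> (\<not> consistent xs \<or> (\<forall>(s,G)\<in>T. asg_do G xs s V = c))"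
  by auto

lemma sat_imp: "sat_g T (FImp (FAtom V v) (FCf xs (FAtom V v))) \<longleftrightarrow>
   (\<forall>(s,G)\<in>T. s V \<noteq> v \<or> \<not> consistent xs \<or> asg_do G xs s V = v)"
proof
  assume "sat_g T (FImp (FAtom V v) (FCf xs (FAtom V v)))"
  then obtain T1 T2 where "T = T1 \<union> T2" "\<forall>(s,G)\<in>T1. s V \<noteq> v"
    "\<not> consistent xs \<or> (\<forall>(s,G)\<in>T2. asg_do G xs s V = v)"
    by (auto simp: FImp_def sat_cf simp del: sat_g.simps(5))
  then show "\<forall>(s,G)\<in>T. s V \<noteq> v \<or> \<not> consistent xs \<or> asg_do G xs s V = v" by auto
next
  assume H: "\<forall>(s,G)\<in>T. s V \<noteq> v \<or> \<not> consistent xs \<or> asg_do G xs s V = v"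
  let ?T1 = "{(s,G)\<in>T. s V \<noteq> v}" and ?T2 = "{(s,G)\<in>T. s V = v}"
  have "T = ?T1 \<union> ?T2" by auto
  moreover have "\<forall>(s,G)\<in>?T1. s V \<noteq> v" by auto
  moreover have "\<not> consistent xs \<or> (\<forall>(s,G)\<in>?T2. asg_do G xs s V = v)" using H by auto
  ultimately show "sat_g T (FImp (FAtom V v) (FCf xs (FAtom V v)))"
    unfolding FImp_def sat_g.simps(4) sat_g.simps(2) sat_cf
    by (intro exI[of _ ?T1] exI[of _ ?T2]) auto
qed

lemma sat_eta:
  assumes fin: "finite Dom" and PAF: "PA F V \<subseteq> Dom - {V}"
  shows "(\<forall>\<phi>\<in>eta Dom Ran F V. sat_g T \<phi>) \<longleftrightarrow>
    (\<forall>w\<in>PiE (Dom - (PA F V \<union> {V})) Ran. \<forall>p\<in>PiE (PA F V) Ran. \<forall>(s,G)\<in>T.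
       asg_do G (ivn (Dom - (PA F V \<union> {V})) w @ ivn (PA F V) p) s V = Fn F V p)"
proof -
  have f1: "finite (Dom - (PA F V \<union> {V}))" "finite (PA F V)" using fin PAF by (auto intro: finite_subset)
  have cons: "consistent (ivn (Dom - (PA F V \<union> {V})) w @ ivn (PA F V) p)" for w p
    by (rule consistent_u[where u="\<lambda>X. if X \<in> PA F V then p X else w X"]) (use f1 in \<open>auto simp: set_ivn\<close>)
  have "(\<forall>\<phi>\<in>eta Dom Ran F V. sat_g T \<phi>) \<longleftrightarrow> (\<forall>w\<in>PiE (Dom - (PA F V \<union> {V})) Ran. \<forall>p\<in>PiE (PA F V) Ran.
     sat_g T (FCf (ivn (Dom - (PA F V \<union> {V})) w @ ivn (PA F V) p) (FAtom V (Fn F V p))))"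
    unfolding eta_def by blast
  also have "\<dots> \<longleftrightarrow> (\<forall>w\<in>PiE (Dom - (PA F V \<union> {V})) Ran. \<forall>p\<in>PiE (PA F V) Ran. \<forall>(s,G)\<in>T.
       asg_do G (ivn (Dom - (PA F V \<union> {V})) w @ ivn (PA F V) p) s V = Fn F V p)"
    by (simp only: sat_cf cons not_True_eq_False simp_thms)
  finally show ?thesis .
qed

lemma sat_xi:
  assumes fin: "finite Dom"
  shows "(\<forall>\<phi>\<in>xi Dom Ran V. sat_g T \<phi>) \<longleftrightarrow>
    (\<forall>v\<in>Ran V. \<forall>w\<in>PiE (Dom - {V}) Ran. \<forall>(s,G)\<in>T. s V = v \<longrightarrow> asg_do G (ivn (Dom - {V}) w) s V = v)"
proof -
  have cons: "consistent (ivn (Dom - {V}) w)" for w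
    by (rule consistent_u[where u=w]) (use fin in \<open>auto simp: set_ivn\<close>)
  have "(\<forall>\<phi>\<in>xi Dom Ran V. sat_g T \<phi>) \<longleftrightarrow> (\<forall>v\<in>Ran V. \<forall>w\<in>PiE (Dom - {V}) Ran.
     sat_g T (FImp (FAtom V v) (FCf (ivn (Dom - {V}) w) (FAtom V v))))"
    unfolding xi_def by blast
  also have "\<dots> \<longleftrightarrow> (\<forall>v\<in>Ran V. \<forall>w\<in>PiE (Dom - {V}) Ran. \<forall>(s,G)\<in>T. s V \<noteq> v \<or> asg_do G (ivn (Dom - {V}) w) s V = v)"
    by (simp only: sat_imp cons not_True_eq_False simp_thms)
  also have "\<dots> \<longleftrightarrow> (\<forall>v\<in>Ran V. \<forall>w\<in>PiE (Dom - {V}) Ran. \<forall>(s,G)\<in>T. s V = v \<longrightarrow> asg_do G (ivn (Dom - {V}) w) s V = v)"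
    by blast
  finally show ?thesis .
qed

lemma PhiSet_fin_ne:
  assumes sig: "is_sig Dom Ran" and F: "F \<in> FF Dom Ran"
  shows "finite (PhiSet Dom Ran F) \<and> PhiSet Dom Ran F \<noteq> {}"
proof
  have fin: "finite Dom" and ne: "\<forall>i\<in>Dom. Ran i \<noteq> {} \<and> finite (Ran i)" and dne: "Dom \<noteq> {}"
    using sig by (auto simp: is_sig_def)
  have fe: "finite (eta Dom Ran F V)" if "V \<in> En F" for V
  proof -
    have PAF: "PA F V \<subseteq> Dom - {V}" using FF_PA[OF F that] .
    have "eta Dom Ran F V \<subseteq> (\<lambda>(w,p). FCf (ivn (Dom - (PA F V \<union> {V})) w @ ivn (PA F V) p) (FAtom V (Fn F V p)))
        ` (PiE (Dom - (PA F V \<union> {V})) Ran \<times> PiE (PA F V) Ran)"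
      unfolding eta_def by auto
    moreover have "finite (PiE (Dom - (PA F V \<union> {V})) Ran \<times> PiE (PA F V) Ran)"
      using fin ne PAF by (intro finite_cartesian_product finite_PiE) (auto intro: finite_subset)
    ultimately show ?thesis by (meson finite_imageI finite_subset)
  qed
  have fx: "finite (xi Dom Ran V)" if "V \<in> Dom" for V
  proof -
    have "xi Dom Ran V \<subseteq> (\<lambda>(v,w). FImp (FAtom V v) (FCf (ivn (Dom - {V}) w) (FAtom V v)))
        ` (Ran V \<times> PiE (Dom - {V}) Ran)"
      unfolding xi_def by auto
    moreover have "finite (Ran V \<times> PiE (Dom - {V}) Ran)"
      using fin ne that by (intro finite_cartesian_product finite_PiE) auto
    ultimately show ?thesis by (meson finite_imageI finite_subset)
  qed
  have EnD: "En F \<subseteq> Dom" using FF_En[OF F] .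
  show "finite (PhiSet Dom Ran F)" unfolding PhiSet_def
    using fe fx fin EnD by (intro finite_UnI finite_UN_I) (auto intro: finite_subset)
  obtain V where V: "V \<in> Dom" using dne by auto
  show "PhiSet Dom Ran F \<noteq> {}"
  proof (cases "V \<in> En F - Cn Ran F")
    case True
    have PAF: "PA F V \<subseteq> Dom - {V}" using FF_PA[OF F] True by auto
    obtain w where w: "w \<in> PiE (Dom - (PA F V \<union> {V})) Ran" using ne
      by (metis (no_types, lifting) DiffD1 PiE_eq_empty_iff ex_in_conv)
    obtain p where p: "p \<in> PiE (PA F V) Ran" using ne PAF
      by (metis (no_types, lifting) DiffD1 PiE_eq_empty_iff ex_in_conv subsetD)
    have "eta Dom Ran F V \<noteq> {}" using w p unfolding eta_def by blast
    then show ?thesis using True unfolding PhiSet_def by blast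
  next
    case False
    obtain w where w: "w \<in> PiE (Dom - {V}) Ran" using ne
      by (metis (no_types, lifting) DiffD1 PiE_eq_empty_iff ex_in_conv)
    obtain v where v: "v \<in> Ran V" using ne V by auto
    have "xi Dom Ran V \<noteq> {}" using w v unfolding xi_def by blast
    then show ?thesis using False V unfolding PhiSet_def by blast
  qed
qed

lemma sat_Phi_set:
  assumes sig: "is_sig Dom Ran" and F: "F \<in> FF Dom Ran"
  shows "sat_g T (Phi Dom Ran F) \<longleftrightarrow> (\<forall>\<phi>\<in>PhiSet Dom Ran F. sat_g T \<phi>)"
proof -
  let ?xs = "SOME xs. set xs = PhiSet Dom Ran F \<and> distinct xs"
  have "set ?xs = PhiSet Dom Ran F \<and> distinct ?xs"
    by (rule someI_ex) (rule finite_distinct_list, use PhiSet_fin_ne[OF sig F] in simp)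
  moreover then have "?xs \<noteq> []" using PhiSet_fin_ne[OF sig F] by auto
  ultimately show ?thesis unfolding Phi_def by (simp add: sat_g_conj)
qed

lemma comb:
  assumes sig: "is_sig Dom Ran" and F: "F \<in> FF Dom Ran" and G: "G \<in> FF Dom Ran"
  shows "((\<forall>V\<in>En F - Cn Ran F. V \<in> En G \<and> (\<forall>u\<in>PiE (Dom - {V}) Ran. Fn G V (restrict u (PA G V)) = Fn F V (restrict u (PA F V))))
      \<and> (\<forall>V\<in>Dom - (En F - Cn Ran F). V \<notin> En G - Cn Ran G)) \<longleftrightarrow> sys_equiv Ran G F"
proof -
  have ne: "\<forall>i\<in>Dom. Ran i \<noteq> {}" using sig by (auto simp: is_sig_def)
  have ne': "\<forall>i\<in>Dom - {V}. Ran i \<noteq> {}" for V using ne by auto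
  show ?thesis
  proof
    assume H: "(\<forall>V\<in>En F - Cn Ran F. V \<in> En G \<and> (\<forall>u\<in>PiE (Dom - {V}) Ran. Fn G V (restrict u (PA G V)) = Fn F V (restrict u (PA F V))))
      \<and> (\<forall>V\<in>Dom - (En F - Cn Ran F). V \<notin> En G - Cn Ran G)"
    have s1: "En F - Cn Ran F \<subseteq> En G - Cn Ran G"
    proof
      fix V assume V: "V \<in> En F - Cn Ran F"
      have VG: "V \<in> En G" and ag: "\<forall>u\<in>PiE (Dom - {V}) Ran. Fn G V (restrict u (PA G V)) = Fn F V (restrict u (PA F V))"
        using H V by auto
      show "V \<in> En G - Cn Ran G"
      proof (rule ccontr)
        assume "V \<notin> En G - Cn Ran G"
        then obtain cc where cc: "\<forall>p\<in>PiE (PA G V) Ran. Fn G V p = cc" using VG by (auto simp: Cn_def)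
        have "\<forall>p\<in>PiE (PA F V) Ran. Fn F V p = cc"
        proof
          fix p assume p: "p \<in> PiE (PA F V) Ran"
          obtain u where u: "u \<in> PiE (Dom - {V}) Ran" "restrict u (PA F V) = p"
            using ext_PiE[OF FF_PA[OF F] p ne'] V by auto
          have "restrict u (PA G V) \<in> PiE (PA G V) Ran"
            using restrict_PiE_sub[OF u(1) FF_PA[OF G VG]] .
          then show "Fn F V p = cc" using cc ag u by force
        qed
        then have "V \<in> Cn Ran F" using V by (auto simp: Cn_def)
        then show False using V by simp
      qed
    qed
    have s2: "En G - Cn Ran G \<subseteq> En F - Cn Ran F" using H FF_En[OF G] by blast
    show "sys_equiv Ran G F" unfolding sys_equiv_def
    proof (intro conjI ballI)
      show "En G - Cn Ran G = En F - Cn Ran F" using s1 s2 by blast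
      fix V assume V: "V \<in> En G - Cn Ran G"
      then have VF: "V \<in> En F - Cn Ran F" using s2 by blast
      show "fn_equiv Ran G F V"
        using fn_equiv_iff[OF FF_PA[OF F] FF_PA[OF G] ne'] V VF H by blast
    qed
  next
    assume H: "sys_equiv Ran G F"
    then have eq: "En G - Cn Ran G = En F - Cn Ran F" and fe: "\<forall>V\<in>En G - Cn Ran G. fn_equiv Ran G F V"
      by (auto simp: sys_equiv_def)
    show "(\<forall>V\<in>En F - Cn Ran F. V \<in> En G \<and> (\<forall>u\<in>PiE (Dom - {V}) Ran. Fn G V (restrict u (PA G V)) = Fn F V (restrict u (PA F V))))
      \<and> (\<forall>V\<in>Dom - (En F - Cn Ran F). V \<notin> En G - Cn Ran G)"
    proof (intro conjI ballI)
      fix V assume V: "V \<in> En F - Cn Ran F"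
      then show "V \<in> En G" using eq by blast
    next
      fix V u assume V: "V \<in> En F - Cn Ran F" and u: "u \<in> PiE (Dom - {V}) Ran"
      then have VG: "V \<in> En G - Cn Ran G" using eq by blast
      show "Fn G V (restrict u (PA G V)) = Fn F V (restrict u (PA F V))"
        using fn_equiv_iff[OF FF_PA[OF F] FF_PA[OF G] ne'] V VG fe u by blast
    next
      fix V assume "V \<in> Dom - (En F - Cn Ran F)"
      then show "V \<notin> En G - Cn Ran G" using eq by blast
    qed
  qed
qed


lemma elem_iff:
  assumes sig: "is_sig Dom Ran" and F: "F \<in> FF Dom Ran" and sG: "(s, G) \<in> SS Dom Ran"
  shows "((\<forall>V\<in>En F - Cn Ran F. \<forall>w\<in>PiE (Dom - (PA F V \<union> {V})) Ran. \<forall>p\<in>PiE (PA F V) Ran.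
            asg_do G (ivn (Dom - (PA F V \<union> {V})) w @ ivn (PA F V) p) s V = Fn F V p)
      \<and> (\<forall>V\<in>Dom - (En F - Cn Ran F). \<forall>v\<in>Ran V. \<forall>w\<in>PiE (Dom - {V}) Ran. s V = v \<longrightarrow> asg_do G (ivn (Dom - {V}) w) s V = v))
    \<longleftrightarrow> sys_equiv Ran G F"
proof -
  have G: "G \<in> FF Dom Ran" and s: "s \<in> PiE Dom Ran" and c: "compat G s" using sG by (auto simp: SS_def)
  show ?thesis
    using A_iff[OF sig F G, of _ s] B_iff[OF sig G s c] comb[OF sig F G]
    by (smt (verit, ccfv_threshold) Diff_iff)
qed

lemma main_g:
  assumes sig: "is_sig Dom Ran" and F: "F \<in> FF Dom Ran" and T: "T \<subseteq> SS Dom Ran"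
  shows "sat_g T (Phi Dom Ran F) \<longleftrightarrow> (\<forall>(s, G)\<in>T. sys_equiv Ran G F)"
proof -
  have fin: "finite Dom" using sig by (auto simp: is_sig_def)
  have EnD: "En F \<subseteq> Dom" using FF_En[OF F] .
  have "sat_g T (Phi Dom Ran F) \<longleftrightarrow> (\<forall>\<phi>\<in>PhiSet Dom Ran F. sat_g T \<phi>)"
    by (rule sat_Phi_set[OF sig F])
  also have "\<dots> \<longleftrightarrow> (\<forall>V\<in>En F - Cn Ran F. \<forall>\<phi>\<in>eta Dom Ran F V. sat_g T \<phi>)
      \<and> (\<forall>V\<in>Dom - (En F - Cn Ran F). \<forall>\<phi>\<in>xi Dom Ran V. sat_g T \<phi>)"
    unfolding PhiSet_def by blast
  also have "\<dots> \<longleftrightarrow> (\<forall>V\<in>En F - Cn Ran F. \<forall>w\<in>PiE (Dom - (PA F V \<union> {V})) Ran. \<forall>p\<in>PiE (PA F V) Ran. \<forall>(s,G)\<in>T.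
       asg_do G (ivn (Dom - (PA F V \<union> {V})) w @ ivn (PA F V) p) s V = Fn F V p)
      \<and> (\<forall>V\<in>Dom - (En F - Cn Ran F). \<forall>v\<in>Ran V. \<forall>w\<in>PiE (Dom - {V}) Ran. \<forall>(s,G)\<in>T. s V = v \<longrightarrow> asg_do G (ivn (Dom - {V}) w) s V = v)"
  proof -
    have e1: "(\<forall>V\<in>En F - Cn Ran F. \<forall>\<phi>\<in>eta Dom Ran F V. sat_g T \<phi>) \<longleftrightarrow> (\<forall>V\<in>En F - Cn Ran F. \<forall>w\<in>PiE (Dom - (PA F V \<union> {V})) Ran. \<forall>p\<in>PiE (PA F V) Ran. \<forall>(s,G)\<in>T.
       asg_do G (ivn (Dom - (PA F V \<union> {V})) w @ ivn (PA F V) p) s V = Fn F V p)"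
      using sat_eta[OF fin FF_PA[OF F]] by simp
    have e2: "(\<forall>V\<in>Dom - (En F - Cn Ran F). \<forall>\<phi>\<in>xi Dom Ran V. sat_g T \<phi>) \<longleftrightarrow> (\<forall>V\<in>Dom - (En F - Cn Ran F). \<forall>v\<in>Ran V. \<forall>w\<in>PiE (Dom - {V}) Ran. \<forall>(s,G)\<in>T. s V = v \<longrightarrow> asg_do G (ivn (Dom - {V}) w) s V = v)"
      by (rule ball_cong[OF refl]) (rule sat_xi[OF fin])
    show ?thesis using e1 e2 by (rule arg_cong2[where f="(\<and>)"])
  qed
  also have "\<dots> \<longleftrightarrow> (\<forall>(s,G)\<in>T. (\<forall>V\<in>En F - Cn Ran F. \<forall>w\<in>PiE (Dom - (PA F V \<union> {V})) Ran. \<forall>p\<in>PiE (PA F V) Ran.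
            asg_do G (ivn (Dom - (PA F V \<union> {V})) w @ ivn (PA F V) p) s V = Fn F V p)
      \<and> (\<forall>V\<in>Dom - (En F - Cn Ran F). \<forall>v\<in>Ran V. \<forall>w\<in>PiE (Dom - {V}) Ran. s V = v \<longrightarrow> asg_do G (ivn (Dom - {V}) w) s V = v))"
    by blast
  also have "\<dots> \<longleftrightarrow> (\<forall>(s, G)\<in>T. sys_equiv Ran G F)"
  proof (rule ball_cong[OF refl])
    fix x assume x: "x \<in> T"
    obtain s G where sG: "x = (s, G)" by (cases x)
    have "(s, G) \<in> SS Dom Ran" using x sG T by auto
    from elem_iff[OF sig F this] show "(case x of (s, G) \<Rightarrow> (\<forall>V\<in>En F - Cn Ran F. \<forall>w\<in>PiE (Dom - (PA F V \<union> {V})) Ran. \<forall>p\<in>PiE (PA F V) Ran.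
            asg_do G (ivn (Dom - (PA F V \<union> {V})) w @ ivn (PA F V) p) s V = Fn F V p)
      \<and> (\<forall>V\<in>Dom - (En F - Cn Ran F). \<forall>v\<in>Ran V. \<forall>w\<in>PiE (Dom - {V}) Ran. s V = v \<longrightarrow> asg_do G (ivn (Dom - {V}) w) s V = v))
      = (case x of (s, G) \<Rightarrow> sys_equiv Ran G F)" unfolding sG by simp
  qed
  finally show ?thesis .
qed

lemma sat_c_g: "sat_c S G \<phi> \<longleftrightarrow> sat_g ((\<lambda>s. (s, G)) ` S) \<phi>"
proof (induction \<phi> arbitrary: S G)
  case (FOr \<alpha> \<beta>)
  show ?case
  proof
    assume "sat_c S G (FOr \<alpha> \<beta>)"
    then obtain S1 S2 where "S1 \<union> S2 = S" "sat_c S1 G \<alpha>" "sat_c S2 G \<beta>" by auto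
    then show "sat_g ((\<lambda>s. (s, G)) ` S) (FOr \<alpha> \<beta>)" using FOr.IH
      by (simp only: sat_g.simps) (intro exI[of _ "(\<lambda>s. (s, G)) ` S1"] exI[of _ "(\<lambda>s. (s, G)) ` S2"], auto)
  next
    assume "sat_g ((\<lambda>s. (s, G)) ` S) (FOr \<alpha> \<beta>)"
    then obtain T1 T2 where T: "(\<lambda>s. (s, G)) ` S = T1 \<union> T2" "sat_g T1 \<alpha>" "sat_g T2 \<beta>" by auto
    define S1 where "S1 = {s. (s, G) \<in> T1}"
    define S2 where "S2 = {s. (s, G) \<in> T2}"
    have sub: "T1 \<subseteq> (\<lambda>s. (s, G)) ` S" "T2 \<subseteq> (\<lambda>s. (s, G)) ` S" using T(1) by auto
    have "T1 = (\<lambda>s. (s, G)) ` S1" using sub(1) unfolding S1_def by force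
    moreover have "T2 = (\<lambda>s. (s, G)) ` S2" using sub(2) unfolding S2_def by force
    moreover have "S1 \<union> S2 = S" using T(1) unfolding S1_def S2_def by auto
    ultimately show "sat_c S G (FOr \<alpha> \<beta>)" using T FOr.IH by auto
  qed
next
  case (FCf xs \<alpha>)
  have "(\<lambda>(s, F). (asg_do F xs s, sys_do F xs)) ` (\<lambda>s. (s, G)) ` S = (\<lambda>s. (s, sys_do G xs)) ` asg_do G xs ` S"
    by (simp add: image_image)
  then show ?case using FCf.IH by simp
qed auto

theorem theorem3p4:
  fixes Dom :: "'v set" and Ran :: "'v \<Rightarrow> 'a set" and F :: "('v, 'a) sys"
  assumes "is_sig Dom Ran" and "F \<in> FF Dom Ran"
  shows "(\<forall>T. T \<subseteq> SS Dom Ran \<longrightarrow>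
            (sat_g T (Phi Dom Ran F) \<longleftrightarrow> (\<forall>(s, G)\<in>T. sys_equiv Ran G F))
          \<and> ((\<forall>(s, G)\<in>T. sys_equiv Ran G F) \<longleftrightarrow> team_restr Ran T F = T))
       \<and> (\<forall>S G. S \<noteq> {} \<and> causal_team Dom Ran S G \<longrightarrow>
            (sat_c S G (Phi Dom Ran F) \<longleftrightarrow> sys_equiv Ran G F))"
proof (intro conjI allI impI)
  fix T assume T: "T \<subseteq> SS Dom Ran"
  show "sat_g T (Phi Dom Ran F) \<longleftrightarrow> (\<forall>(s, G)\<in>T. sys_equiv Ran G F)"
    by (rule main_g[OF assms T])
  show "(\<forall>(s, G)\<in>T. sys_equiv Ran G F) \<longleftrightarrow> team_restr Ran T F = T"
    unfolding team_restr_def by blast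
next
  fix S G assume H: "S \<noteq> {} \<and> causal_team Dom Ran S G"
  have sub: "(\<lambda>s. (s, G)) ` S \<subseteq> SS Dom Ran" using H by (auto simp: causal_team_def SS_def)
  have "sat_c S G (Phi Dom Ran F) \<longleftrightarrow> (\<forall>(s, G')\<in>(\<lambda>s. (s, G)) ` S. sys_equiv Ran G' F)"
    unfolding sat_c_g by (rule main_g[OF assms sub])
  also have "\<dots> \<longleftrightarrow> sys_equiv Ran G F" using H by auto
  finally show "sat_c S G (Phi Dom Ran F) \<longleftrightarrow> sys_equiv Ran G F" .
qed

end
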